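(* Let $k\ge2$. Let $\alpha(x)=\forall y\,([y^{-1}xy,x]=e)$, $\beta(y)=\forall x\,(\alpha(x)\rightarrow y^{-1}xy=x^k)$, and let $\gamma(x,y,z,t)$ be a group formula such that for every $b_1\in Ab$ and all $n,l,m\in\mathbb{Z}$, $BS(1,k)\models\gamma(b_1^n,b_1^l,b_1^m,b_1)$ iff $nl=m$. Define $\tau(x,y,h,b_1)=\alpha(x)\wedge\alpha(y)\wedge([h,b_1]=e)\wedge\beta(b_1)\wedge\forall v\,\forall w\,\big([v,b_1]=[w,b_1]=e\wedge\gamma(h,v,w,b_1)\rightarrow\exists u\,(\alpha(u)\wedge[v,y]=[w,x][v,[u,v]])\big)$. Then for $x,y,h,b_1\in BS(1,k)$, $BS(1,k)\models\tau(x,y,h,b_1)$ if and only if $b_1\in Ab$, $x=a^l$ and $y=a^t$ for some $l,t\in\mathbb{Z}[1/k]$, $h=b_1^z$ for some $z\in\mathbb{Z}$, and $l\cdot z=t$.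
   Context: $BS(1,k)=\langle a,b\mid b^{-1}ab=a^k\rangle$, identified with $\mathbb{Z}[1/k]\rtimes\mathbb{Z}$ (pairs $(y,m)$, $y\in\mathbb{Z}[1/k]=\{zk^i:z,i\in\mathbb{Z}\}$, product $(y_1,m_1)(y_2,m_2)=(y_1+y_2k^{-m_1},m_1+m_2)$), with $a=(1,0)$, $b=(0,1)$; $a^y=(y,0)$ for $y\in\mathbb{Z}[1/k]$. $Ab=\{a^yb:y\in\mathbb{Z}[1/k]\}$. The commutator is $[x,y]=x^{-1}y^{-1}xy$. *)

theory Defs
  imports Complex_Main "HOL-Algebra.Group"
begin

definition Zk :: "int \<Rightarrow> rat set" where
  "Zk k = {of_int z * (of_int k) powi i | z i. True}"

text \<open>BS(1,k) realised as Z[1/k] \<rtimes> Z with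
  (y1,m1)(y2,m2) = (y1 + y2 k^(-m1), m1 + m2).\<close>
definition BS :: "int \<Rightarrow> (rat \<times> int) monoid" where
  "BS k = \<lparr> carrier = Zk k \<times> UNIV,
            mult = (\<lambda>p q. (fst p + fst q * (of_int k) powi (- snd p), snd p + snd q)),
            one = (0, 0) \<rparr>"

definition apow :: "rat \<Rightarrow> rat \<times> int" where
  "apow y = (y, 0)"

definition bgen :: "rat \<times> int" where
  "bgen = (0, 1)"

definition Ab :: "int \<Rightarrow> (rat \<times> int) set" where
  "Ab k = {apow y \<otimes>\<^bsub>BS k\<^esub> bgen | y. y \<in> Zk k}"

definition comm :: "('a, 'b) monoid_scheme \<Rightarrow> 'a \<Rightarrow> 'a \<Rightarrow> 'a" where
  "comm G x y = inv\<^bsub>G\<^esub> x \<otimes>\<^bsub>G\<^esub> inv\<^bsub>G\<^esub> y \<otimes>\<^bsub>G\<^esub> x \<otimes>\<^bsub>G\<^esub> y"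

definition alpha :: "int \<Rightarrow> rat \<times> int \<Rightarrow> bool" where
  "alpha k x = (\<forall>y\<in>carrier (BS k).
      comm (BS k) (inv\<^bsub>BS k\<^esub> y \<otimes>\<^bsub>BS k\<^esub> x \<otimes>\<^bsub>BS k\<^esub> y) x = \<one>\<^bsub>BS k\<^esub>)"

definition beta :: "int \<Rightarrow> rat \<times> int \<Rightarrow> bool" where
  "beta k y = (\<forall>x\<in>carrier (BS k). alpha k x \<longrightarrow>
      inv\<^bsub>BS k\<^esub> y \<otimes>\<^bsub>BS k\<^esub> x \<otimes>\<^bsub>BS k\<^esub> y = x [^]\<^bsub>BS k\<^esub> k)"

definition tau :: "int \<Rightarrow> (rat \<times> int \<Rightarrow> rat \<times> int \<Rightarrow> rat \<times> int \<Rightarrow> rat \<times> int \<Rightarrow> bool)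
    \<Rightarrow> rat \<times> int \<Rightarrow> rat \<times> int \<Rightarrow> rat \<times> int \<Rightarrow> rat \<times> int \<Rightarrow> bool" where
  "tau k \<gamma> x y h b1 =
     (alpha k x \<and> alpha k y \<and> comm (BS k) h b1 = \<one>\<^bsub>BS k\<^esub> \<and> beta k b1 \<and>
      (\<forall>v\<in>carrier (BS k). \<forall>w\<in>carrier (BS k).
         comm (BS k) v b1 = \<one>\<^bsub>BS k\<^esub> \<and> comm (BS k) w b1 = \<one>\<^bsub>BS k\<^esub> \<and> \<gamma> h v w b1 \<longrightarrow>
         (\<exists>u\<in>carrier (BS k). alpha k u \<and>
            comm (BS k) v y = comm (BS k) w x \<otimes>\<^bsub>BS k\<^esub> comm (BS k) v (comm (BS k) u v))))"

end

theory Submission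
  imports Defs
begin

lemma Zk_I: "q = of_int z * (of_int k) powi i \<Longrightarrow> q \<in> Zk k"
  unfolding Zk_def by blast

lemma Zk_E: "q \<in> Zk k \<Longrightarrow> (\<And>z i. q = of_int z * (of_int k) powi i \<Longrightarrow> P) \<Longrightarrow> P"
  unfolding Zk_def by blast

lemma Zk_int[simp]: "of_int z \<in> Zk k"
  by (rule Zk_I[of _ z k 0]) simp

lemma Zk_0[simp]: "0 \<in> Zk k" using Zk_int[of 0 k] by simp
lemma Zk_1[simp]: "1 \<in> Zk k" using Zk_int[of 1 k] by simp

lemma Zk_pow[simp]: "(of_int k) powi i \<in> Zk k"
  by (rule Zk_I[of _ 1 k i]) simp

lemma Zk_uminus[simp]: "q \<in> Zk k \<Longrightarrow> - q \<in> Zk k"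
  by (erule Zk_E, rule Zk_I[where z="- _"]) simp

lemma Zk_mult[simp]:
  assumes k: "k \<noteq> 0" and "q \<in> Zk k" "r \<in> Zk k" shows "q * r \<in> Zk k"
proof -
  obtain z i where q: "q = of_int z * (of_int k) powi i" using assms(2) by (rule Zk_E)
  obtain w j where r: "r = of_int w * (of_int k) powi j" using assms(3) by (rule Zk_E)
  have "q * r = of_int (z*w) * (of_int k) powi (i+j)"
    using k by (simp add: q r power_int_add)
  thus ?thesis by (rule Zk_I)
qed

lemma Zk_add[simp]:
  assumes k: "k \<noteq> 0" and "q \<in> Zk k" "r \<in> Zk k" shows "q + r \<in> Zk k"
proof -
  obtain z i where q: "q = of_int z * (of_int k) powi i" using assms(2) by (rule Zk_E)
  obtain w j where r: "r = of_int w * (of_int k) powi j" using assms(3) by (rule Zk_E)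
  define m where "m = min i j"
  have ki: "(of_int k::rat) powi i = (of_int k) powi (i - m) * (of_int k) powi m"
    using k by (simp flip: power_int_add)
  have kj: "(of_int k::rat) powi j = (of_int k) powi (j - m) * (of_int k) powi m"
    using k by (simp flip: power_int_add)
  have e1: "(of_int k::rat) powi (i - m) = of_int (k ^ nat (i - m))"
    by (simp add: m_def power_int_def)
  have e2: "(of_int k::rat) powi (j - m) = of_int (k ^ nat (j - m))"
    by (simp add: m_def power_int_def)
  have "q + r = of_int (z * k ^ nat (i - m) + w * k ^ nat (j - m)) * (of_int k) powi m"
    by (simp add: q r ki kj e1 e2 algebra_simps)
  thus ?thesis by (rule Zk_I)
qed

lemma Zk_diff[simp]:
  assumes k: "k \<noteq> 0" and "q \<in> Zk k" "r \<in> Zk k" shows "q - r \<in> Zk k"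
  using Zk_add[OF k assms(2) Zk_uminus[OF assms(3)]] by simp

lemma group_BS: assumes k: "k \<noteq> 0" shows "group (BS k)"
proof (rule groupI)
  fix x y assume "x \<in> carrier (BS k)" "y \<in> carrier (BS k)"
  thus "x \<otimes>\<^bsub>BS k\<^esub> y \<in> carrier (BS k)" using k by (auto simp: BS_def)
next
  show "\<one>\<^bsub>BS k\<^esub> \<in> carrier (BS k)" by (simp add: BS_def)
next
  fix x y z assume "x \<in> carrier (BS k)" "y \<in> carrier (BS k)" "z \<in> carrier (BS k)"
  show "x \<otimes>\<^bsub>BS k\<^esub> y \<otimes>\<^bsub>BS k\<^esub> z = x \<otimes>\<^bsub>BS k\<^esub> (y \<otimes>\<^bsub>BS k\<^esub> z)"
    using k by (simp add: BS_def power_int_add power_int_minus algebra_simps)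
next
  fix x assume "x \<in> carrier (BS k)"
  thus "\<one>\<^bsub>BS k\<^esub> \<otimes>\<^bsub>BS k\<^esub> x = x" by (simp add: BS_def)
next
  fix x assume x: "x \<in> carrier (BS k)"
  show "\<exists>y\<in>carrier (BS k). y \<otimes>\<^bsub>BS k\<^esub> x = \<one>\<^bsub>BS k\<^esub>"
  proof (intro bexI)
    show "(- fst x * (of_int k) powi (snd x), - snd x) \<otimes>\<^bsub>BS k\<^esub> x = \<one>\<^bsub>BS k\<^esub>"
      using k by (simp add: BS_def)
    show "(- fst x * (of_int k) powi (snd x), - snd x) \<in> carrier (BS k)"
      using x k by (auto simp: BS_def)
  qed
qed

lemma carrier_BS[simp]: "x \<in> carrier (BS k) \<longleftrightarrow> fst x \<in> Zk k"
  by (cases x) (simp add: BS_def)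

lemma mult_BS[simp]: "(a, m) \<otimes>\<^bsub>BS k\<^esub> (b, n) = (a + b * (of_int k) powi (- m), m + n)"
  by (simp add: BS_def)

lemma one_BS[simp]: "\<one>\<^bsub>BS k\<^esub> = (0, 0)"
  by (simp add: BS_def)
lemma inv_BS[simp]:
  assumes k: "k \<noteq> 0" and c: "c \<in> Zk k"
  shows "inv\<^bsub>BS k\<^esub> (c, m) = (- c * (of_int k) powi m, - m)"
proof -
  interpret group "BS k" using group_BS[OF k] .
  show ?thesis
    apply (rule inv_equality) using k c apply simp_all
    done
qed
lemma comm_BS:
  assumes k: "k \<noteq> 0" and c: "c \<in> Zk k" and e: "e \<in> Zk k"
  shows "comm (BS k) (c, m) (e, n) =
    (c * ((of_int k) powi (m + n) - (of_int k) powi m) + e * ((of_int k) powi n - (of_int k) powi (m + n)), 0)"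
proof -
  have a: "(of_int k::rat) powi (m + n) = (of_int k) powi m * (of_int k) powi n"
       "(of_int k::rat) powi (n + m) = (of_int k) powi m * (of_int k) powi n"
    using k by (simp_all add: power_int_add)
  show ?thesis using k c e by (simp add: comm_def a) (simp add: algebra_simps)
qed
lemma conj_BS:
  assumes k: "k \<noteq> 0" and c: "c \<in> Zk k" and e: "e \<in> Zk k"
  shows "inv\<^bsub>BS k\<^esub> (e, n) \<otimes>\<^bsub>BS k\<^esub> (c, m) \<otimes>\<^bsub>BS k\<^esub> (e, n) =
    (- e * (of_int k) powi n + c * (of_int k) powi n + e * (of_int k) powi (n - m), m)"
proof -
  have a: "(of_int k::rat) powi (n - m) = (of_int k) powi n * (of_int k) powi (-m)"
    using k power_int_add[of "of_int k::rat" n "-m"] by simp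
  show ?thesis using k c e by (simp add: a algebra_simps)
qed
lemma snd_pow_nat:
  assumes k: "k \<noteq> 0" and g: "g \<in> carrier (BS k)"
  shows "snd (g [^]\<^bsub>BS k\<^esub> (n::nat)) = int n * snd g"
proof (induction n)
  case 0 then show ?case by simp
next
  case (Suc n)
  then show ?case by (cases "g [^]\<^bsub>BS k\<^esub> n", cases g) (simp add: algebra_simps)
qed

lemma snd_pow:
  assumes k: "k \<noteq> 0" and g: "g \<in> carrier (BS k)"
  shows "snd (g [^]\<^bsub>BS k\<^esub> (n::int)) = n * snd g"
proof -
  interpret group "BS k" using group_BS[OF k] .
  show ?thesis
  proof (cases "n \<ge> 0")
    case True
    define m where "m = nat n"
    have n: "n = int m" using True by (simp add: m_def)
    show ?thesis using snd_pow_nat[OF k g, of m] unfolding n int_pow_int by simp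
  next
    case False
    define m where "m = nat (- n)"
    have n: "n = - int m" using False by (simp add: m_def)
    have cl: "g [^]\<^bsub>BS k\<^esub> m \<in> carrier (BS k)" using g by (rule nat_pow_closed)
    then obtain c q where gm: "g [^]\<^bsub>BS k\<^esub> m = (c, q)" "c \<in> Zk k" by (cases "g [^]\<^bsub>BS k\<^esub> m") auto
    have "q = int m * snd g" using snd_pow_nat[OF k g, of m] gm by simp
    have "g [^]\<^bsub>BS k\<^esub> n = inv\<^bsub>BS k\<^esub> (c, q)" unfolding n int_pow_neg_int[OF g] gm(1) ..
    also have "\<dots> = (- c * (of_int k) powi q, - q)" using k gm(2) by (rule inv_BS)
    finally show ?thesis using \<open>q = int m * snd g\<close> n by simp
  qed
qed

lemma apow_pow_nat:
  shows "(c, 0) [^]\<^bsub>BS k\<^esub> (n::nat) = (of_nat n * c, 0)"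
  by (induction n) (simp_all add: algebra_simps)

lemma apow_pow:
  assumes k: "k \<noteq> 0" and c: "c \<in> Zk k"
  shows "(c, 0) [^]\<^bsub>BS k\<^esub> (n::int) = (of_int n * c, 0)"
proof -
  interpret group "BS k" using group_BS[OF k] .
  have cc: "(c, 0) \<in> carrier (BS k)" using c by simp
  show ?thesis
  proof (cases "n \<ge> 0")
    case True
    define m where "m = nat n"
    have n: "n = int m" using True by (simp add: m_def)
    show ?thesis using apow_pow_nat[where c=c and k=k and n=m] unfolding n int_pow_int by simp
  next
    case False
    define m where "m = nat (- n)"
    have n: "n = - int m" using False by (simp add: m_def)
    have mc: "of_nat m * c \<in> Zk k" using Zk_mult[OF k Zk_int[of "int m" k] c] by simp
    have "(c, 0) [^]\<^bsub>BS k\<^esub> n = inv\<^bsub>BS k\<^esub> ((c, 0) [^]\<^bsub>BS k\<^esub> m)"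
      unfolding n by (rule int_pow_neg_int[OF cc])
    also have "\<dots> = inv\<^bsub>BS k\<^esub> (of_nat m * c, 0)" by (simp only: apow_pow_nat)
    also have "\<dots> = (- (of_nat m * c) * (of_int k) powi 0, - 0)" using k mc by (rule inv_BS)
    finally show ?thesis using n by simp
  qed
qed

lemma (in group) comm_one_iff:
  assumes g: "g \<in> carrier G" and h: "h \<in> carrier G"
  shows "comm G g h = \<one> \<longleftrightarrow> g \<otimes> h = h \<otimes> g"
proof -
  have "comm G g h = inv (h \<otimes> g) \<otimes> (g \<otimes> h)"
    using assms by (simp add: comm_def inv_mult_group m_assoc)
  also have "\<dots> = \<one> \<longleftrightarrow> g \<otimes> h = h \<otimes> g \<otimes> \<one>"
    by (rule inv_solve_left') (use g h in simp_all)
  finally show ?thesis using g h by simp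
qed

lemma (in group) comm_pow_self:
  assumes "b \<in> carrier G"
  shows "comm G (b [^] (n::int)) b = \<one>"
proof -
  have "b [^] n \<otimes> b = b [^] (n + 1)" using assms by (simp add: int_pow_mult)
  also have "\<dots> = b \<otimes> b [^] n" using assms by (simp add: int_pow_mult add.commute[of n 1])
  finally show ?thesis using assms by (simp add: comm_one_iff)
qed
lemma K_eq_1:
  assumes k: "k \<ge> 2" shows "(of_int k :: rat) powi m = 1 \<longleftrightarrow> m = 0"
proof
  assume h: "(of_int k :: rat) powi m = 1"
  have g1: "(1::rat) < of_int k" using k by simp
  show "m = 0"
  proof (rule ccontr)
    assume "m \<noteq> 0"
    then consider "m < 0" | "0 < m" by linarith
    then show False
    proof cases
      case 1 then show False using power_int_strict_increasing[OF 1 g1] h by simp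
    next
      case 2 then show False using power_int_strict_increasing[OF 2 g1] h by simp
    qed
  qed
qed simp

lemma K_eq_k:
  assumes k: "k \<ge> 2" shows "(of_int k :: rat) powi m = of_int k \<longleftrightarrow> m = 1"
proof
  assume h: "(of_int k :: rat) powi m = of_int k"
  have g1: "(1::rat) < of_int k" using k by simp
  show "m = 1"
  proof (rule ccontr)
    assume "m \<noteq> 1"
    then consider "m < 1" | "1 < m" by linarith
    then show False
    proof cases
      case 1 then show False using power_int_strict_increasing[OF 1 g1] h by simp
    next
      case 2 then show False using power_int_strict_increasing[OF 2 g1] h by simp
    qed
  qed
qed simp

lemma alpha_iff:
  assumes k: "k \<ge> 2" and x: "x \<in> carrier (BS k)"
  shows "alpha k x \<longleftrightarrow> snd x = 0"
proof -
  have k0: "k \<noteq> 0" using k by simp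
  obtain c m where xe: "x = (c, m)" by (cases x)
  have c: "c \<in> Zk k" using x xe by simp
  define K where "K = (of_int k :: rat) powi m"
  define c' where "c' = - 1 + c + (of_int k) powi (- m)"
  have c': "c' \<in> Zk k" using k0 c by (simp add: c'_def)
  show ?thesis
  proof
    assume "alpha k x"
    then have "comm (BS k) (inv\<^bsub>BS k\<^esub> (1, 0) \<otimes>\<^bsub>BS k\<^esub> x \<otimes>\<^bsub>BS k\<^esub> (1, 0)) x = \<one>\<^bsub>BS k\<^esub>"
      unfolding alpha_def by (drule_tac x="(1,0)" in bspec) simp_all
    moreover have "inv\<^bsub>BS k\<^esub> (1, 0) \<otimes>\<^bsub>BS k\<^esub> x \<otimes>\<^bsub>BS k\<^esub> (1, 0) = (c', m)"
      using conj_BS[OF k0 c Zk_1, of 0 m] by (simp add: xe c'_def)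
    ultimately have "comm (BS k) (c', m) (c, m) = (0, 0)" by (simp add: xe)
    then have e: "c' * ((of_int k) powi (m + m) - K) + c * (K - (of_int k) powi (m + m)) = 0"
      using comm_BS[OF k0 c' c] by (simp add: K_def)
    have a1: "(of_int k :: rat) powi (m + m) = K * K" unfolding K_def using power_int_add[of "of_int k::rat" m m] k0 by simp
    have a2: "(of_int k :: rat) powi (- m) * K = 1" using k0 by (simp add: power_int_minus K_def)
    have "c' * ((of_int k) powi (m + m) - K) + c * (K - (of_int k) powi (m + m))
        = ((of_int k) powi (- m) * K - K) * (K - 1)"
      unfolding a1 c'_def by (simp add: algebra_simps)
    also have "\<dots> = - (K - 1) * (K - 1)" unfolding a2 by (simp add: algebra_simps)
    finally have "K = 1" using e by simp
    then show "snd x = 0" using K_eq_1[OF k] xe by (simp add: K_def)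
  next
    assume "snd x = 0"
    then have xe: "x = (c, 0)" using xe by simp
    show "alpha k x" unfolding alpha_def
    proof
      fix y assume y: "y \<in> carrier (BS k)"
      obtain e n where ye: "y = (e, n)" by (cases y)
      have e: "e \<in> Zk k" using y ye by simp
      have "inv\<^bsub>BS k\<^esub> y \<otimes>\<^bsub>BS k\<^esub> x \<otimes>\<^bsub>BS k\<^esub> y = (c * (of_int k) powi n, 0)"
        using conj_BS[OF k0 c e, of n 0] by (simp add: xe ye)
      moreover have "c * (of_int k) powi n \<in> Zk k" using k0 c by simp
      ultimately show "comm (BS k) (inv\<^bsub>BS k\<^esub> y \<otimes>\<^bsub>BS k\<^esub> x \<otimes>\<^bsub>BS k\<^esub> y) x = \<one>\<^bsub>BS k\<^esub>"
        using comm_BS[OF k0 _ c] by (simp add: xe)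
    qed
  qed
qed

lemma geo_nat:
  assumes k: "k \<noteq> 0" and Q: "Q \<in> Zk k"
  shows "\<exists>c\<in>Zk k. Q ^ n - 1 - of_nat n * (Q - 1) = (Q - 1)^2 * c"
proof (induction n)
  case 0 show ?case by (intro bexI[of _ 0]) simp_all
next
  case (Suc n)
  then obtain c where c: "c \<in> Zk k" and e: "Q ^ n - 1 - of_nat n * (Q - 1) = (Q - 1)^2 * c" by blast
  have "Q ^ Suc n - 1 - of_nat (Suc n) * (Q - 1) = Q * (Q ^ n - 1 - of_nat n * (Q - 1)) + of_nat n * (Q - 1)^2"
    by (simp add: algebra_simps power2_eq_square)
  also have "\<dots> = (Q - 1)^2 * (Q * c + of_nat n)" using e by (simp add: algebra_simps)
  finally show ?case
    using Zk_add[OF k Zk_mult[OF k Q c] Zk_int[of "int n" k]] by auto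
qed

lemma geo:
  assumes k: "k \<noteq> 0" and Q: "Q \<in> Zk k" and Qi: "inverse Q \<in> Zk k" and Q0: "Q \<noteq> 0"
  shows "\<exists>c\<in>Zk k. Q powi z - 1 - of_int z * (Q - 1) = (Q - 1)^2 * c"
proof (cases "z \<ge> 0")
  case True
  then obtain n where z: "z = int n" by (metis nonneg_eq_int)
  show ?thesis using geo_nat[OF k Q, of n] by (simp add: z)
next
  case False
  define n where "n = nat (- z)"
  have z: "z = - int n" using False by (simp add: n_def)
  define Q' where "Q' = inverse Q"
  obtain c' where c': "c' \<in> Zk k" and e: "Q' ^ n - 1 - of_nat n * (Q' - 1) = (Q' - 1)^2 * c'"
    using geo_nat[OF k Qi, of n] by (auto simp: Q'_def)
  have pw: "Q powi (- int n) = Q' ^ n" by (simp add: power_int_minus Q'_def power_inverse)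
  have "Q powi z - 1 - of_int z * (Q - 1) = (Q - 1)^2 * (of_nat n * Q' + Q' * Q' * c')"
  proof -
    have "Q powi z - 1 - of_int z * (Q - 1) = of_nat n * (Q' - 1) + (Q' - 1)^2 * c' + of_nat n * (Q - 1)"
      using e by (simp add: pw z algebra_simps)
    also have "\<dots> = (Q - 1)^2 * (of_nat n * Q' + Q' * Q' * c')"
    proof -
      have hQ: "Q * Q' = 1" using Q0 by (simp add: Q'_def)
      show ?thesis using hQ unfolding power2_eq_square by algebra
    qed
    finally show ?thesis .
  qed
  moreover have "of_nat n * Q' + Q' * Q' * c' \<in> Zk k"
  proof -
    have "of_int (int n) * Q' + Q' * Q' * c' \<in> Zk k"
      using Qi c' k Zk_int[of "int n" k] unfolding Q'_def by (intro Zk_add Zk_mult) auto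
    then show ?thesis by simp
  qed
  ultimately show ?thesis by blast
qed

lemma pow_ge: "(k::int) \<ge> 2 \<Longrightarrow> k ^ p \<ge> int p + 1"
proof (induction p)
  case (Suc p)
  then have "k ^ Suc p = k * k ^ p" by simp
  also have "\<dots> \<ge> 2 * (int p + 1)" using Suc by (intro mult_mono) auto
  finally show ?case by simp
qed simp

lemma coprime_km1:
  assumes "p \<ge> 1" shows "coprime ((k::int) ^ p - 1) k"
proof (rule coprimeI)
  fix c assume a: "c dvd k ^ p - 1" and b: "c dvd k"
  have "c dvd k ^ p" using b assms by (cases p) auto
  then have "c dvd k ^ p - (k ^ p - 1)" using a by (rule dvd_diff)
  then show "is_unit c" by simp
qed

lemma Zk_div_zero:
  assumes k: "k \<ge> 2" and D: "D \<in> Zk k"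
    and H: "\<And>p::nat. p \<ge> 1 \<Longrightarrow> \<exists>e\<in>Zk k. D = (of_int k ^ p - 1) * e"
  shows "D = 0"
proof (rule ccontr)
  assume D0: "D \<noteq> 0"
  have k0: "k \<noteq> 0" using k by simp
  obtain d i where Dd: "D = of_int d * (of_int k) powi i" using D by (rule Zk_E)
  have d0: "d \<noteq> 0" using D0 Dd by auto
  define p where "p = nat \<bar>d\<bar> + 1"
  obtain e where e: "e \<in> Zk k" and De: "D = (of_int k ^ p - 1) * e" using H[of p] by (auto simp: p_def)
  obtain e0 j where ee: "e = of_int e0 * (of_int k) powi j" using e by (rule Zk_E)
  define mn where "mn = min i j"
  define a where "a = nat (i - mn)"
  define b where "b = nat (j - mn)"
  have ki: "(of_int k::rat) powi i = of_int (k ^ a) * (of_int k) powi mn"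
    using k0 power_int_add[of "of_int k::rat" "i - mn" mn] by (simp add: a_def mn_def power_int_def)
  have kj: "(of_int k::rat) powi j = of_int (k ^ b) * (of_int k) powi mn"
    using k0 power_int_add[of "of_int k::rat" "j - mn" mn] by (simp add: b_def mn_def power_int_def)
  have "of_int (d * k ^ a) * (of_int k::rat) powi mn = of_int ((k ^ p - 1) * e0 * k ^ b) * (of_int k) powi mn"
    using Dd De ee ki kj by (simp add: algebra_simps)
  then have "of_int (d * k ^ a) = (of_int ((k ^ p - 1) * e0 * k ^ b) :: rat)"
    using k0 by simp
  then have "d * k ^ a = (k ^ p - 1) * e0 * k ^ b" by (simp only: of_int_eq_iff)
  then have "(k ^ p - 1) dvd d * k ^ a" by (metis dvd_triv_left mult.assoc)
  moreover have "coprime (k ^ p - 1) (k ^ a)" using coprime_km1[of p k] by (simp add: p_def)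
  ultimately have "(k ^ p - 1) dvd d" using coprime_dvd_mult_left_iff by blast
  then have "\<bar>k ^ p - 1\<bar> \<le> \<bar>d\<bar>" using d0 by (simp add: dvd_imp_le_int)
  moreover have "k ^ p - 1 \<ge> int p" using pow_ge[OF k, of p] by simp
  ultimately show False by (simp add: p_def)
qed

lemma Ab_iff: "b \<in> Ab k \<longleftrightarrow> fst b \<in> Zk k \<and> snd b = 1"
  by (cases b) (auto simp: Ab_def apow_def bgen_def)

lemma beta_iff:
  assumes k: "k \<ge> 2" and b: "b \<in> carrier (BS k)"
  shows "beta k b \<longleftrightarrow> snd b = 1"
proof -
  have k0: "k \<noteq> 0" using k by simp
  obtain d m where be: "b = (d, m)" by (cases b)
  have d: "d \<in> Zk k" using b be by simp
  have cj: "inv\<^bsub>BS k\<^esub> b \<otimes>\<^bsub>BS k\<^esub> (c, 0) \<otimes>\<^bsub>BS k\<^esub> b = (c * (of_int k) powi m, 0)"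
    if c: "c \<in> Zk k" for c
    using conj_BS[OF k0 c d, of m 0] by (simp add: be)
  show ?thesis
  proof
    assume "beta k b"
    then have "inv\<^bsub>BS k\<^esub> b \<otimes>\<^bsub>BS k\<^esub> (1, 0) \<otimes>\<^bsub>BS k\<^esub> b = (1, 0) [^]\<^bsub>BS k\<^esub> k"
      unfolding beta_def using alpha_iff[OF k, of "(1,0)"] by simp
    then have "(of_int k :: rat) powi m = of_int k"
      using cj[OF Zk_1] apow_pow[OF k0 Zk_1, of k] by simp
    then show "snd b = 1" using K_eq_k[OF k] be by simp
  next
    assume "snd b = 1"
    then have m: "m = 1" using be by simp
    show "beta k b" unfolding beta_def
    proof (intro ballI impI)
      fix x assume x: "x \<in> carrier (BS k)" and "alpha k x"
      then have "snd x = 0" using alpha_iff[OF k x] by simp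
      then obtain c where xe: "x = (c, 0)" by (cases x) auto
      have c: "c \<in> Zk k" using x xe by simp
      show "inv\<^bsub>BS k\<^esub> b \<otimes>\<^bsub>BS k\<^esub> x \<otimes>\<^bsub>BS k\<^esub> b = x [^]\<^bsub>BS k\<^esub> k"
        using cj[OF c] apow_pow[OF k0 c, of k] by (simp add: xe m mult.commute)
    qed
  qed
qed

lemma centralizer:
  assumes k: "k \<ge> 2" and b: "b \<in> carrier (BS k)" and b1: "snd b = 1"
    and h: "h \<in> carrier (BS k)" and hc: "comm (BS k) h b = \<one>\<^bsub>BS k\<^esub>"
  shows "h = b [^]\<^bsub>BS k\<^esub> (snd h)"
proof -
  have k0: "k \<noteq> 0" using k by simp
  interpret group "BS k" using group_BS[OF k0] .
  obtain d where be: "b = (d, 1)" using b1 by (cases b) auto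
  have d: "d \<in> Zk k" using b be by simp
  obtain c m where he: "h = (c, m)" by (cases h)
  have c: "c \<in> Zk k" using h he by simp
  have pc: "b [^]\<^bsub>BS k\<^esub> m \<in> carrier (BS k)" by (rule int_pow_closed[OF b])
  have ps: "snd (b [^]\<^bsub>BS k\<^esub> m) = m" using snd_pow[OF k0 b, of m] b1 by simp
  then obtain c' where pe: "b [^]\<^bsub>BS k\<^esub> m = (c', m)" by (cases "b [^]\<^bsub>BS k\<^esub> m") auto
  have c': "c' \<in> Zk k" using pc pe by simp
  have pcomm: "comm (BS k) (c', m) (d, 1) = (0, 0)" using comm_pow_self[OF b, of m] pe be by simp
  define K where "K = (of_int k :: rat) powi m"
  have a1: "(of_int k :: rat) powi (m + 1) = K * of_int k" using k0 by (simp add: K_def power_int_add)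
  have e1: "c * (K * of_int k - K) + d * (of_int k - K * of_int k) = 0"
    using hc comm_BS[OF k0 c d, of m 1] a1 by (simp add: he be K_def)
  have e2: "c' * (K * of_int k - K) + d * (of_int k - K * of_int k) = 0"
    using pcomm comm_BS[OF k0 c' d, of m 1] a1 by (simp add: K_def)
  have "(c - c') * (K * (of_int k - 1)) = 0" using e1 e2 by (simp add: algebra_simps)
  moreover have "K \<noteq> 0" using k0 by (simp add: K_def)
  moreover have "(of_int k :: rat) - 1 \<noteq> 0" using k by simp
  ultimately have "c = c'" by simp
  then show ?thesis using pe he by simp
qed

lemma key_eq:
  assumes k: "k \<ge> 2" and dv: "dv \<in> Zk k" and dw: "dw \<in> Zk k"
    and l: "l \<in> Zk k" and t: "t \<in> Zk k" and r: "r \<in> Zk k"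
  shows "comm (BS k) (dv, p) (t, 0) = comm (BS k) (dw, q) (l, 0) \<otimes>\<^bsub>BS k\<^esub> comm (BS k) (dv, p) (comm (BS k) (r, 0) (dv, p))
     \<longleftrightarrow> t * (1 - (of_int k) powi p) = l * (1 - (of_int k) powi q) + r * ((of_int k) powi p - 1) * (1 - (of_int k) powi p)"
proof -
  have k0: "k \<noteq> 0" using k by simp
  have c1: "comm (BS k) (dv, p) (t, 0) = (t * (1 - (of_int k) powi p), 0)"
    using comm_BS[OF k0 dv t, of p 0] by simp
  have c2: "comm (BS k) (dw, q) (l, 0) = (l * (1 - (of_int k) powi q), 0)"
    using comm_BS[OF k0 dw l, of q 0] by simp
  have c3: "comm (BS k) (r, 0) (dv, p) = (r * ((of_int k) powi p - 1), 0)"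
    using comm_BS[OF k0 r dv, of 0 p] by simp
  have r': "r * ((of_int k) powi p - 1) \<in> Zk k" using k0 r by simp
  have c4: "comm (BS k) (dv, p) (r * ((of_int k) powi p - 1), 0) = (r * ((of_int k) powi p - 1) * (1 - (of_int k) powi p), 0)"
    using comm_BS[OF k0 dv r', of p 0] by simp
  show ?thesis unfolding c1 c2 c3 c4 by simp
qed


theorem lemma4p8:
  fixes k :: int
    and \<gamma> :: "rat \<times> int \<Rightarrow> rat \<times> int \<Rightarrow> rat \<times> int \<Rightarrow> rat \<times> int \<Rightarrow> bool"
    and x y h b1 :: "rat \<times> int"
  assumes "k \<ge> 2"
    and "\<forall>b \<in> Ab k. \<forall>n l m :: int.
           \<gamma> (b [^]\<^bsub>BS k\<^esub> n) (b [^]\<^bsub>BS k\<^esub> l) (b [^]\<^bsub>BS k\<^esub> m) b \<longleftrightarrow> n * l = m"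
    and "x \<in> carrier (BS k)" "y \<in> carrier (BS k)" "h \<in> carrier (BS k)" "b1 \<in> carrier (BS k)"
  shows "tau k \<gamma> x y h b1 \<longleftrightarrow>
    (b1 \<in> Ab k \<and>
     (\<exists>l \<in> Zk k. \<exists>t \<in> Zk k. x = apow l \<and> y = apow t \<and>
        (\<exists>z :: int. h = b1 [^]\<^bsub>BS k\<^esub> z \<and> l * of_int z = t)))"
proof -
  note k = assms(1) and hg = assms(2) and x = assms(3) and y = assms(4) and h = assms(5) and b1 = assms(6)
  have k0: "k \<noteq> 0" using k by simp
  interpret G: group "BS k" using group_BS[OF k0] .
  have powv: "\<exists>dv. b1 [^]\<^bsub>BS k\<^esub> p = (dv, p) \<and> dv \<in> Zk k" if "snd b1 = 1" for p :: int
  proof -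
    have "b1 [^]\<^bsub>BS k\<^esub> p \<in> carrier (BS k)" by (rule G.int_pow_closed[OF b1])
    moreover have "snd (b1 [^]\<^bsub>BS k\<^esub> p) = p" using snd_pow[OF k0 b1, of p] that by simp
    ultimately show ?thesis by (cases "b1 [^]\<^bsub>BS k\<^esub> p") auto
  qed
  show ?thesis
  proof
    assume T: "tau k \<gamma> x y h b1"
    then have ax: "alpha k x" and ay: "alpha k y" and hc: "comm (BS k) h b1 = \<one>\<^bsub>BS k\<^esub>"
      and bb: "beta k b1" and main: "\<forall>v\<in>carrier (BS k). \<forall>w\<in>carrier (BS k).
         comm (BS k) v b1 = \<one>\<^bsub>BS k\<^esub> \<and> comm (BS k) w b1 = \<one>\<^bsub>BS k\<^esub> \<and> \<gamma> h v w b1 \<longrightarrow>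
         (\<exists>u\<in>carrier (BS k). alpha k u \<and>
            comm (BS k) v y = comm (BS k) w x \<otimes>\<^bsub>BS k\<^esub> comm (BS k) v (comm (BS k) u v))"
      unfolding tau_def by blast+
    define l where "l = fst x"
    define t where "t = fst y"
    define z where "z = snd h"
    have l: "l \<in> Zk k" using x by (simp add: l_def)
    have t: "t \<in> Zk k" using y by (simp add: t_def)
    have xe: "x = apow l" using alpha_iff[OF k x] ax by (cases x) (simp add: apow_def l_def)
    have ye: "y = apow t" using alpha_iff[OF k y] ay by (cases y) (simp add: apow_def t_def)
    have b11: "snd b1 = 1" using beta_iff[OF k b1] bb by simp
    have bA: "b1 \<in> Ab k" using b1 b11 by (simp add: Ab_iff)
    have he: "h = b1 [^]\<^bsub>BS k\<^esub> z" unfolding z_def by (rule centralizer[OF k b1 b11 h hc])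
    define D where "D = t - l * of_int z"
    have "D = 0"
    proof (rule Zk_div_zero[OF k])
      show "D \<in> Zk k" using k0 l t by (simp add: D_def)
    next
      fix p :: nat assume p1: "p \<ge> 1"
      define v where "v = b1 [^]\<^bsub>BS k\<^esub> (int p)"
      define w where "w = b1 [^]\<^bsub>BS k\<^esub> (z * int p)"
      have vc: "v \<in> carrier (BS k)" "w \<in> carrier (BS k)" unfolding v_def w_def by (rule G.int_pow_closed[OF b1])+
      have vcomm: "comm (BS k) v b1 = \<one>\<^bsub>BS k\<^esub>" "comm (BS k) w b1 = \<one>\<^bsub>BS k\<^esub>"
        unfolding v_def w_def using G.comm_pow_self[OF b1] by auto
      have "\<gamma> h v w b1" unfolding he v_def w_def using hg bA by simp
      then obtain u where u: "u \<in> carrier (BS k)" and au: "alpha k u"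
        and eq: "comm (BS k) v y = comm (BS k) w x \<otimes>\<^bsub>BS k\<^esub> comm (BS k) v (comm (BS k) u v)"
        using main vc vcomm by blast
      obtain r where ue: "u = (r, 0)" and r: "r \<in> Zk k"
        using alpha_iff[OF k u] au u by (cases u) auto
      obtain dv where ve: "v = (dv, int p)" and dv: "dv \<in> Zk k" using powv[OF b11, of "int p"] v_def by blast
      obtain dw where we: "w = (dw, z * int p)" and dw: "dw \<in> Zk k" using powv[OF b11, of "z * int p"] w_def by blast
      define Q where "Q = (of_int k :: rat) powi (int p)"
      have Qz: "(of_int k :: rat) powi (z * int p) = Q powi z"
        unfolding Q_def by (metis power_int_mult mult.commute)
      have E: "t * (1 - Q) = l * (1 - Q powi z) + r * (Q - 1) * (1 - Q)"
        using eq key_eq[OF k dv dw l t r, of "int p" "z * int p"] unfolding ve we ue xe ye apow_def Qz Q_def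
        by simp
      have Qin: "Q \<in> Zk k" "inverse Q \<in> Zk k" "Q \<noteq> 0"
        unfolding Q_def using k0 Zk_pow[of k "- int p"] Zk_pow[of k "int p"] by (auto simp: power_int_minus)
      obtain c where c: "c \<in> Zk k" and ce: "Q powi z - 1 - of_int z * (Q - 1) = (Q - 1)^2 * c"
        using geo[OF k0 Qin] by blast
      have Q1: "Q - 1 \<noteq> 0" using K_eq_1[OF k, of "int p"] p1 by (simp add: Q_def)
      have "(Q - 1) * D = (Q - 1) * ((Q - 1) * (l * c + r))"
      proof -
        have "Q powi z = 1 + of_int z * (Q - 1) + (Q - 1)^2 * c" using ce by (simp add: algebra_simps)
        then have "t * (1 - Q) = l * (1 - (1 + of_int z * (Q - 1) + (Q - 1)^2 * c)) + r * (Q - 1) * (1 - Q)"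
          using E by simp
        then show ?thesis unfolding D_def power2_eq_square by (simp add: algebra_simps)
      qed
      then have "D = (Q - 1) * (l * c + r)" using Q1 by simp
      moreover have "l * c + r \<in> Zk k" using k0 l c r by simp
      moreover have "Q - 1 = of_int k ^ p - 1" by (simp add: Q_def)
      ultimately show "\<exists>e\<in>Zk k. D = (of_int k ^ p - 1) * e" by auto
    qed
    then have "l * of_int z = t" by (simp add: D_def)
    then show "b1 \<in> Ab k \<and> (\<exists>l \<in> Zk k. \<exists>t \<in> Zk k. x = apow l \<and> y = apow t \<and>
        (\<exists>z :: int. h = b1 [^]\<^bsub>BS k\<^esub> z \<and> l * of_int z = t))"
      using bA l t xe ye he by blast
  next
    assume R: "b1 \<in> Ab k \<and> (\<exists>l \<in> Zk k. \<exists>t \<in> Zk k. x = apow l \<and> y = apow t \<and>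
        (\<exists>z :: int. h = b1 [^]\<^bsub>BS k\<^esub> z \<and> l * of_int z = t))"
    then obtain l t z where bA: "b1 \<in> Ab k" and l: "l \<in> Zk k" and t: "t \<in> Zk k"
      and xe: "x = apow l" and ye: "y = apow t" and he: "h = b1 [^]\<^bsub>BS k\<^esub> z" and lz: "l * of_int z = t"
      by blast
    have b11: "snd b1 = 1" using bA by (simp add: Ab_iff)
    have ax: "alpha k x" using alpha_iff[OF k x] xe by (simp add: apow_def)
    have ay: "alpha k y" using alpha_iff[OF k y] ye by (simp add: apow_def)
    have hc: "comm (BS k) h b1 = \<one>\<^bsub>BS k\<^esub>" unfolding he by (rule G.comm_pow_self[OF b1])
    have bb: "beta k b1" using beta_iff[OF k b1] b11 by simp
    show "tau k \<gamma> x y h b1" unfolding tau_def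
    proof (intro conjI ax ay hc bb ballI impI)
      fix v w assume vc: "v \<in> carrier (BS k)" and wc: "w \<in> carrier (BS k)"
        and H: "comm (BS k) v b1 = \<one>\<^bsub>BS k\<^esub> \<and> comm (BS k) w b1 = \<one>\<^bsub>BS k\<^esub> \<and> \<gamma> h v w b1"
      define p where "p = snd v"
      define q where "q = snd w"
      have vp: "v = b1 [^]\<^bsub>BS k\<^esub> p" unfolding p_def using centralizer[OF k b1 b11 vc] H by blast
      have wq: "w = b1 [^]\<^bsub>BS k\<^esub> q" unfolding q_def using centralizer[OF k b1 b11 wc] H by blast
      have "z * p = q" using H hg bA unfolding he vp wq by blast
      obtain dv where ve: "v = (dv, p)" and dv: "dv \<in> Zk k" using powv[OF b11, of p] vp by blast
      obtain dw where we: "w = (dw, q)" and dw: "dw \<in> Zk k" using powv[OF b11, of q] wq by blast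
      define Q where "Q = (of_int k :: rat) powi p"
      have Qz: "(of_int k :: rat) powi q = Q powi z"
        unfolding Q_def \<open>z * p = q\<close>[symmetric] by (simp add: power_int_mult mult.commute)
      have Qin: "Q \<in> Zk k" "inverse Q \<in> Zk k" "Q \<noteq> 0"
        unfolding Q_def using k0 Zk_pow[of k "- p"] Zk_pow[of k p] by (auto simp: power_int_minus)
      obtain c where c: "c \<in> Zk k" and ce: "Q powi z - 1 - of_int z * (Q - 1) = (Q - 1)^2 * c"
        using geo[OF k0 Qin] by blast
      define r where "r = - (l * c)"
      have r: "r \<in> Zk k" using k0 l c by (simp add: r_def)
      have E: "t * (1 - Q) = l * (1 - Q powi z) + r * (Q - 1) * (1 - Q)"
      proof -
        have qz: "Q powi z = 1 + of_int z * (Q - 1) + (Q - 1)^2 * c" using ce by (simp add: algebra_simps)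
        show ?thesis unfolding r_def lz[symmetric] qz power2_eq_square by (simp add: algebra_simps)
      qed
      show "\<exists>u\<in>carrier (BS k). alpha k u \<and>
            comm (BS k) v y = comm (BS k) w x \<otimes>\<^bsub>BS k\<^esub> comm (BS k) v (comm (BS k) u v)"
      proof (intro bexI conjI)
        show "(r, 0) \<in> carrier (BS k)" using r by simp
        then show "alpha k (r, 0)" using alpha_iff[OF k] by simp
        show "comm (BS k) v y = comm (BS k) w x \<otimes>\<^bsub>BS k\<^esub> comm (BS k) v (comm (BS k) (r, 0) v)"
          using E key_eq[OF k dv dw l t r, of p q] unfolding ve we xe ye apow_def Qz Q_def
          by simp
      qed
    qed
  qed
qed

end
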